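(* Let $u_0,u_1,u_2,u_3$ be nodes of $G$ such that $u_3$ lies on a shortest path between $u_1$ and $u_2$, all pairwise distances among $u_0,u_1,u_2,u_3$ are strictly positive except possibly $d_{u_1,u_3}$, and $$d_{u_1,u_3}=\left\lceil \frac{d_{u_1,u_2}+d_{u_0,u_1}-d_{u_0,u_2}}{2}\right\rceil .$$ Then $$\left\lceil \frac{d_{u_0,u_1}+d_{u_0,u_2}+d_{u_1,u_2}}{2}\right\rceil \le d_{u_0,u_3}+d_{u_1,u_2}\le \left\lceil \frac{d_{u_0,u_1}+d_{u_0,u_2}+d_{u_1,u_2}}{2}\right\rceil + 2\,\delta_{u_0,u_1,u_2,u_3}.$$
   Context: $G=(V,E)$ is a finite connected undirected graph with $n\ge 4$ nodes and $d_{u,v}$ denotes the shortest-path distance (number of edges) between nodes $u,v$. For any four nodes $w_1,w_2,w_3,w_4$, form the three sums $d_{w_1,w_2}+d_{w_3,w_4}$, $d_{w_1,w_3}+d_{w_2,w_4}$, $d_{w_1,w_4}+d_{w_2,w_3}$, order them as $S\le M\le L$, and set $\delta_{w_1,w_2,w_3,w_4}=(L-M)/2$. Also $\delta_{\mathrm{worst}}(G)=\max_{w_1,w_2,w_3,w_4\in V}\delta_{w_1,w_2,w_3,w_4}$. *)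

theory Defs
  imports Complex_Main
begin

definition graph :: "'a set \<Rightarrow> ('a \<times> 'a) set \<Rightarrow> bool" where
  "graph V E \<longleftrightarrow> finite V \<and> E \<subseteq> V \<times> V \<and> sym E \<and> irrefl E"

definition walk :: "'a set \<Rightarrow> ('a \<times> 'a) set \<Rightarrow> 'a \<Rightarrow> 'a \<Rightarrow> 'a list \<Rightarrow> bool" where
  "walk V E u v xs \<longleftrightarrow> xs \<noteq> [] \<and> hd xs = u \<and> last xs = v \<and> set xs \<subseteq> V \<and>
     (\<forall>i. Suc i < length xs \<longrightarrow> (xs ! i, xs ! Suc i) \<in> E)"

definition connected_graph :: "'a set \<Rightarrow> ('a \<times> 'a) set \<Rightarrow> bool" where
  "connected_graph V E \<longleftrightarrow> (\<forall>u\<in>V. \<forall>v\<in>V. \<exists>xs. walk V E u v xs)"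

definition gdist :: "'a set \<Rightarrow> ('a \<times> 'a) set \<Rightarrow> 'a \<Rightarrow> 'a \<Rightarrow> nat" where
  "gdist V E u v = (LEAST n. \<exists>xs. walk V E u v xs \<and> length xs = Suc n)"

definition on_shortest_path :: "'a set \<Rightarrow> ('a \<times> 'a) set \<Rightarrow> 'a \<Rightarrow> 'a \<Rightarrow> 'a \<Rightarrow> bool" where
  "on_shortest_path V E u v w \<longleftrightarrow>
     (\<exists>xs. walk V E u v xs \<and> length xs = Suc (gdist V E u v) \<and> w \<in> set xs)"

definition delta4 :: "'a set \<Rightarrow> ('a \<times> 'a) set \<Rightarrow> 'a \<Rightarrow> 'a \<Rightarrow> 'a \<Rightarrow> 'a \<Rightarrow> real" where
  "delta4 V E w1 w2 w3 w4 =
    (let d = gdist V E;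
         s1 = real (d w1 w2 + d w3 w4);
         s2 = real (d w1 w3 + d w2 w4);
         s3 = real (d w1 w4 + d w2 w3);
         L = max s1 (max s2 s3);
         S = min s1 (min s2 s3);
         M = s1 + s2 + s3 - L - S
     in (L - M) / 2)"

end

theory Submission
  imports Defs
begin

fun ch :: "('a \<times> 'a) set \<Rightarrow> 'a list \<Rightarrow> bool" where
  "ch E (x # y # zs) = ((x, y) \<in> E \<and> ch E (y # zs))"
| "ch E _ = True"

lemma ch_iff: "(\<forall>i. Suc i < length xs \<longrightarrow> (xs ! i, xs ! Suc i) \<in> E) \<longleftrightarrow> ch E xs"
proof (induction xs rule: ch.induct)
  case (1 E x y zs)
  show ?case
  proof
    assume H: "\<forall>i. Suc i < length (x # y # zs) \<longrightarrow> ((x # y # zs) ! i, (x # y # zs) ! Suc i) \<in> E"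
    have "(x,y) \<in> E" using H[rule_format, of 0] by simp
    moreover have "\<forall>i. Suc i < length (y # zs) \<longrightarrow> ((y # zs) ! i, (y # zs) ! Suc i) \<in> E"
      using H by (metis Suc_less_eq length_Cons nth_Cons_Suc)
    ultimately show "ch E (x # y # zs)" using 1 by simp
  next
    assume "ch E (x # y # zs)"
    hence a: "(x,y) \<in> E" and b: "\<forall>i. Suc i < length (y # zs) \<longrightarrow> ((y # zs) ! i, (y # zs) ! Suc i) \<in> E"
      using 1 by auto
    show "\<forall>i. Suc i < length (x # y # zs) \<longrightarrow> ((x # y # zs) ! i, (x # y # zs) ! Suc i) \<in> E"
    proof (intro allI impI)
      fix i assume "Suc i < length (x # y # zs)"
      then show "((x # y # zs) ! i, (x # y # zs) ! Suc i) \<in> E"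
        using a b by (cases i) auto
    qed
  qed
qed auto

lemma walk_iff: "walk V E u v xs \<longleftrightarrow> xs \<noteq> [] \<and> hd xs = u \<and> last xs = v \<and> set xs \<subseteq> V \<and> ch E xs"
  unfolding walk_def ch_iff ..

lemma ch_Cons: "ch E (x # xs) \<longleftrightarrow> (xs = [] \<or> ((x, hd xs) \<in> E \<and> ch E xs))"
  by (cases xs) auto

lemma ch_app: "ch E (xs @ [v]) \<Longrightarrow> ch E (v # ys) \<Longrightarrow> ch E (xs @ v # ys)"
  by (induction xs) (auto simp: ch_Cons split: if_splits, (metis append_is_Nil_conv hd_append list.sel(1) not_Cons_self)+)

lemma ch_appD1: "ch E (xs @ ys) \<Longrightarrow> ch E xs"
  by (induction xs) (auto simp: ch_Cons)

lemma ch_appD2: "ch E (xs @ ys) \<Longrightarrow> ch E ys"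
  by (induction xs) (auto simp: ch_Cons)

lemma ch_rev: "sym E \<Longrightarrow> ch E xs \<Longrightarrow> ch E (rev xs)"
proof (induction E xs rule: ch.induct)
  case (1 E x y zs)
  have "ch E (rev zs @ [y])" using 1 by simp
  moreover have "(y,x) \<in> E" using 1 by (auto dest: symD)
  ultimately show ?case by (simp add: ch_app)
qed auto

lemma gdist_le: "walk V E u v xs \<Longrightarrow> gdist V E u v \<le> length xs - 1"
  unfolding gdist_def
  by (rule Least_le) (rule exI[of _ xs], cases xs, auto simp: walk_def)

lemma gdist_ex: "walk V E u v xs \<Longrightarrow> \<exists>ys. walk V E u v ys \<and> length ys = Suc (gdist V E u v)"
  unfolding gdist_def
  by (rule LeastI_ex) (rule exI[of _ "length xs - 1"], rule exI[of _ xs], cases xs, auto simp: walk_def)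

lemma walk_app:
  assumes "walk V E u v xs" "walk V E v w ys"
  shows "walk V E u w (xs @ tl ys)"
proof -
  obtain xs0 where xs: "xs = xs0 @ [v]" using assms(1) unfolding walk_iff
    by (metis append_butlast_last_id)
  obtain ys' where ys: "ys = v # ys'" using assms(2) unfolding walk_iff
    by (metis list.collapse)
  have "ch E (xs0 @ v # ys')" using ch_app[of E xs0 v ys'] assms xs ys unfolding walk_iff by simp
  moreover have "hd (xs0 @ v # ys') = u" using assms(1) xs unfolding walk_iff by (cases xs0) auto
  moreover have "last (xs0 @ v # ys') = w" using assms(2) ys unfolding walk_iff by (cases ys') auto
  ultimately show ?thesis using assms xs ys unfolding walk_iff by auto
qed

lemma walk_rev: "sym E \<Longrightarrow> walk V E u v xs \<Longrightarrow> walk V E v u (rev xs)"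
  unfolding walk_iff by (auto simp: ch_rev hd_rev last_rev)

lemma tri:
  assumes "connected_graph V E" "u \<in> V" "v \<in> V" "w \<in> V"
  shows "gdist V E u w \<le> gdist V E u v + gdist V E v w"
proof -
  obtain xs where "walk V E u v xs" using assms unfolding connected_graph_def by blast
  from gdist_ex[OF this] obtain xs' where x: "walk V E u v xs'" "length xs' = Suc (gdist V E u v)" by blast
  obtain ys where "walk V E v w ys" using assms unfolding connected_graph_def by blast
  from gdist_ex[OF this] obtain ys' where y: "walk V E v w ys'" "length ys' = Suc (gdist V E v w)" by blast
  have "walk V E u w (xs' @ tl ys')" using walk_app[OF x(1) y(1)] .
  from gdist_le[OF this] show ?thesis using x y by (cases ys') simp_all
qed

lemma gsym:
  assumes "graph V E" "connected_graph V E" "u \<in> V" "v \<in> V"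
  shows "gdist V E u v \<le> gdist V E v u"
proof -
  obtain xs where "walk V E v u xs" using assms unfolding connected_graph_def by blast
  from gdist_ex[OF this] obtain xs' where x: "walk V E v u xs'" "length xs' = Suc (gdist V E v u)" by blast
  have "sym E" using assms(1) unfolding graph_def by blast
  have "walk V E u v (rev xs')" using walk_rev[OF \<open>sym E\<close> x(1)] .
  from gdist_le[OF this] show ?thesis using x by simp
qed

lemma split_sp:
  assumes "on_shortest_path V E u v w"
  shows "gdist V E u w + gdist V E w v \<le> gdist V E u v"
proof -
  obtain xs where x: "walk V E u v xs" "length xs = Suc (gdist V E u v)" "w \<in> set xs"
    using assms unfolding on_shortest_path_def by blast
  obtain as bs where xs: "xs = as @ w # bs" using x(3) by (meson split_list)
  have cx: "ch E xs" using x(1) unfolding walk_iff by simp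
  have c1: "ch E (as @ [w])" using ch_appD1[of E "as @ [w]" bs] cx xs by simp
  have c2: "ch E (w # bs)" using ch_appD2[of E as "w # bs"] cx xs by simp
  have "walk V E u w (as @ [w])" using x(1) xs c1 unfolding walk_iff by (cases as) auto
  from gdist_le[OF this] have 1: "gdist V E u w \<le> length as" by simp
  have "walk V E w v (w # bs)" using x(1) xs c2 unfolding walk_iff by (cases bs) auto
  from gdist_le[OF this] have 2: "gdist V E w v \<le> length bs" by simp
  show ?thesis using 1 2 x(2) xs by simp
qed


theorem mainTheorem1:
  fixes V :: "'a set" and E :: "('a \<times> 'a) set" and u0 u1 u2 u3 :: 'a
  assumes "graph V E" and "connected_graph V E" and "card V \<ge> 4"
    and "u0 \<in> V" "u1 \<in> V" "u2 \<in> V" "u3 \<in> V"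
    and "on_shortest_path V E u1 u2 u3"
    and "gdist V E u0 u1 > 0" "gdist V E u0 u2 > 0" "gdist V E u0 u3 > 0"
        "gdist V E u1 u2 > 0" "gdist V E u2 u3 > 0"
    and "real (gdist V E u1 u3) =
           real_of_int \<lceil>(real (gdist V E u1 u2) + real (gdist V E u0 u1)
                         - real (gdist V E u0 u2)) / 2\<rceil>"
  shows "real_of_int \<lceil>(real (gdist V E u0 u1) + real (gdist V E u0 u2) + real (gdist V E u1 u2)) / 2\<rceil>
           \<le> real (gdist V E u0 u3 + gdist V E u1 u2)
       \<and> real (gdist V E u0 u3 + gdist V E u1 u2)
           \<le> real_of_int \<lceil>(real (gdist V E u0 u1) + real (gdist V E u0 u2) + real (gdist V E u1 u2)) / 2\<rceil>
             + 2 * delta4 V E u0 u1 u2 u3"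
proof -
  define a where "a = gdist V E u0 u1"
  define b where "b = gdist V E u0 u2"
  define c where "c = gdist V E u1 u2"
  define x where "x = gdist V E u1 u3"
  define y where "y = gdist V E u2 u3"
  define e where "e = gdist V E u0 u3"
  have s1: "x + gdist V E u3 u2 \<le> c" using split_sp[OF assms(8)] unfolding x_def c_def .
  have yy: "y = gdist V E u3 u2" unfolding y_def
    using gsym[OF assms(1,2) \<open>u2 \<in> V\<close> \<open>u3 \<in> V\<close>] gsym[OF assms(1,2) \<open>u3 \<in> V\<close> \<open>u2 \<in> V\<close>] by simp
  have t1: "b \<le> e + y" unfolding b_def e_def yy using tri[OF assms(2) \<open>u0 \<in> V\<close> \<open>u3 \<in> V\<close> \<open>u2 \<in> V\<close>] .
  have xc: "real x = real_of_int \<lceil>(real c + real a - real b) / 2\<rceil>" using assms(14) unfolding x_def a_def b_def c_def .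
  have "(real a + real b + real c) / 2 = (real c + real a - real b) / 2 + real_of_int (int b)" by (simp add: field_simps)
  hence "\<lceil>(real a + real b + real c) / 2\<rceil> = \<lceil>(real c + real a - real b) / 2\<rceil> + int b"
    by (metis ceiling_add_of_int)
  hence C: "real_of_int \<lceil>(real a + real b + real c) / 2\<rceil> = real b + real x" using xc by simp
  have xge: "(real c + real a - real b) / 2 \<le> real x" using xc by (simp add: le_of_int_ceiling)
  have D: "delta4 V E u0 u1 u2 u3 = (real (e + c) - real (b + x)) / 2"
  proof -
    have "real (a + y) \<le> real (b + x)" using xge s1 yy by simp
    moreover have "real (b + x) \<le> real (e + c)" using t1 s1 yy by simp
    ultimately show ?thesis unfolding delta4_def Let_def
      by (simp only: a_def[symmetric] b_def[symmetric] c_def[symmetric] x_def[symmetric]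
          y_def[symmetric] e_def[symmetric]) (simp add: max_def min_def)
  qed
  have "real b + real x \<le> real (e + c)" using t1 s1 yy by simp
  thus ?thesis using C D unfolding a_def[symmetric] b_def[symmetric] c_def[symmetric] e_def[symmetric] by simp
qed

end
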